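(* Let $A,B$ be Pareto sets of size $n$ each, sorted lexicographically, and let $k$ be the size of their Pareto sum. The (heap-based) Sort \& Compare algorithm computes the Pareto sum of $A$ and $B$ in $\mathcal{O}(n^2\log n)$ time using $\mathcal{O}(n+k)$ space.
   Context: For $p,p'\in\mathbb{R}^2$, $p$ dominates $p'$ if $p\neq p'$, $p.x\le p'.x$ and $p.y\le p'.y$. A Pareto set is a set $S\subset\mathbb{R}^2$ in which no point dominates another; $S_i$ denotes the element of rank $i$ in lexicographic order. The Minkowski matrix is $M_{ij}=A_i+B_j$; each column is a lexicographically sorted Pareto set. The Pareto sum $C$ is the set of entries of $M$ not dominated by any entry of $M$. The Sort \& Compare algorithm: initialize a min-heap (lexicographic order) with the first row $M_{11},\dots,M_{1n}$, each element remembering its matrix position. Repeatedly extract the minimum $M_{ij}$; if $C$ is empty or $M_{ij}$ is neither dominated by nor equal to the last element added to $C$, append $M_{ij}$ to $C$; then, if $i<n$, insert $M_{i+1,j}$ into the heap. Stop when the heap is empty. *)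

theory Defs
  imports Complex_Main "HOL-Library.Multiset" "HOL-Library.Product_Lexorder"
begin

text \<open>Points of the plane are pairs of reals. The import Product_Lexorder makes
  the order on pairs (and on triples (point, i, j)) the lexicographic order.\<close>

type_synonym point = "real \<times> real"

definition dominates :: "point \<Rightarrow> point \<Rightarrow> bool" where
  "dominates p q \<longleftrightarrow> p \<noteq> q \<and> fst p \<le> fst q \<and> snd p \<le> snd q"

definition pareto_set :: "point set \<Rightarrow> bool" where
  "pareto_set S \<longleftrightarrow> (\<forall>p\<in>S. \<forall>q\<in>S. \<not> dominates p q)"

text \<open>A Pareto set given as the list of its elements in lexicographic order
  (index 0 is rank 1).\<close>
definition sorted_pareto_list :: "point list \<Rightarrow> bool" where
  "sorted_pareto_list xs \<longleftrightarrow> sorted_wrt (<) xs \<and> pareto_set (set xs)"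

definition padd :: "point \<Rightarrow> point \<Rightarrow> point" where
  "padd p q = (fst p + fst q, snd p + snd q)"

definition mink :: "point list \<Rightarrow> point list \<Rightarrow> nat \<Rightarrow> nat \<Rightarrow> point" where
  "mink A B i j = padd (A ! i) (B ! j)"

definition entries :: "point list \<Rightarrow> point list \<Rightarrow> point set" where
  "entries A B = {mink A B i j | i j. i < length A \<and> j < length B}"

definition pareto_sum :: "point list \<Rightarrow> point list \<Rightarrow> point set" where
  "pareto_sum A B = {p \<in> entries A B. \<not> (\<exists>q\<in>entries A B. dominates q p)}"

type_synonym heap = "(point \<times> nat \<times> nat) multiset"
type_synonym state = "heap \<times> point list"

definition sc_init :: "point list \<Rightarrow> point list \<Rightarrow> state" where
  "sc_init A B = (mset (map (\<lambda>j. (mink A B 0 j, 0, j)) [0..<length B]), [])"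

text \<open>One iteration: extract the (lexicographic) minimum, possibly append it to C,
  insert the entry below it. A heap-min tie between equal points is broken by position.\<close>
definition sc_step :: "point list \<Rightarrow> point list \<Rightarrow> state \<Rightarrow> state" where
  "sc_step A B s = (let (H, C) = s in
     if H = {#} then (H, C) else
     (let x = Min (set_mset H); p = fst x; i = fst (snd x); j = snd (snd x);
          H' = H - {#x#};
          C' = (if C = [] \<or> (\<not> dominates (last C) p \<and> last C \<noteq> p) then C @ [p] else C);
          H'' = (if Suc i < length A then add_mset (mink A B (Suc i) j, Suc i, j) H' else H')
      in (H'', C')))"

definition sc_state :: "point list \<Rightarrow> point list \<Rightarrow> nat \<Rightarrow> state" where
  "sc_state A B t = (sc_step A B ^^ t) (sc_init A B)"

definition sc_iters :: "point list \<Rightarrow> point list \<Rightarrow> nat" where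
  "sc_iters A B = (LEAST t. fst (sc_state A B t) = {#})"

definition sc_output :: "point list \<Rightarrow> point list \<Rightarrow> point list" where
  "sc_output A B = snd (sc_state A B (sc_iters A B))"

text \<open>Cost model: a binary-heap operation (insert / extract-min) on a heap with
  s elements costs 1 + log2(s+1); comparisons and list appends cost O(1).\<close>
definition heap_op_cost :: "nat \<Rightarrow> real" where
  "heap_op_cost s = 1 + log 2 (real s + 1)"

definition step_cost :: "state \<Rightarrow> real" where
  "step_cost s = (if fst s = {#} then 1
     else heap_op_cost (size (fst s)) + 1 + heap_op_cost (size (fst s)))"

definition sc_time :: "point list \<Rightarrow> point list \<Rightarrow> real" where
  "sc_time A B = (\<Sum>j<length B. heap_op_cost j)
     + (\<Sum>t<sc_iters A B. step_cost (sc_state A B t))"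

definition state_space :: "state \<Rightarrow> nat" where
  "state_space s = size (fst s) + length (snd s)"

definition sc_space :: "point list \<Rightarrow> point list \<Rightarrow> nat" where
  "sc_space A B = Max ((\<lambda>t. state_space (sc_state A B t)) ` {0..sc_iters A B})"

end

theory Submission
  imports Defs
begin

definition gH :: "point list \<Rightarrow> point list \<Rightarrow> (nat \<Rightarrow> nat) \<Rightarrow> nat \<Rightarrow> point \<times> nat \<times> nat" where
  "gH A B f j = (mink A B (f j) j, f j, j)"
definition JJ :: "nat \<Rightarrow> (nat \<Rightarrow> nat) \<Rightarrow> nat set" where
  "JJ n f = {j. j < n \<and> f j < n}"
definition PP :: "point list \<Rightarrow> point list \<Rightarrow> nat \<Rightarrow> (nat \<Rightarrow> nat) \<Rightarrow> point set" where
  "PP A B n f = {mink A B i j | i j. j < n \<and> i < f j}"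
definition par :: "point set \<Rightarrow> point set" where
  "par S = {p \<in> S. \<not> (\<exists>q\<in>S. dominates q p)}"

definition scinv :: "point list \<Rightarrow> point list \<Rightarrow> nat \<Rightarrow> (nat \<Rightarrow> nat) \<Rightarrow> state \<Rightarrow> bool" where
  "scinv A B n f s \<longleftrightarrow> (\<forall>j<n. f j \<le> n) \<and>
     fst s = image_mset (gH A B f) (mset_set (JJ n f)) \<and>
     set (snd s) = par (PP A B n f) \<and> sorted_wrt (<) (snd s) \<and>
     (snd s = [] \<longleftrightarrow> PP A B n f = {}) \<and>
     (snd s \<noteq> [] \<longrightarrow> (\<forall>q\<in>PP A B n f. snd (last (snd s)) \<le> snd q)) \<and>
     (\<forall>q\<in>PP A B n f. \<forall>h\<in>#fst s. q \<le> fst h)"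

lemma lex_not_dom: "(q::point) \<le> p \<Longrightarrow> \<not> dominates p q"
  by (cases p; cases q) (auto simp: dominates_def)

lemma col_mono:
  assumes "sorted_wrt (<) A" "Suc i < length A"
  shows "mink A B i j < mink A B (Suc i) j"
proof -
  have "A ! i < A ! Suc i" using assms sorted_wrt_nth_less by blast
  then show ?thesis
    by (cases "A ! i"; cases "A ! Suc i") (auto simp: mink_def padd_def)
qed

lemma step_eq:
  assumes "H \<noteq> {#}" "Min (set_mset H) = (p,i,j)"
  shows "sc_step A B (H,C) = ((if Suc i < length A then add_mset (mink A B (Suc i) j, Suc i, j) (H - {#(p,i,j)#}) else H - {#(p,i,j)#}),
     (if C = [] \<or> (\<not> dominates (last C) p \<and> last C \<noteq> p) then C @ [p] else C))"
  using assms by (simp add: sc_step_def Let_def)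

lemma finJJ: "finite (JJ n f)"
  unfolding JJ_def by auto

lemma step_inv:
  assumes inv: "scinv A B n f (H,C)" and ne: "H \<noteq> {#}" and lA: "length A = n"
    and sA: "sorted_wrt (<) A"
  shows "\<exists>j<n. f j < n \<and> scinv A B n (f(j := Suc (f j))) (sc_step A B (H,C))"
proof -
  define x where "x = Min (set_mset H)"
  have xin: "x \<in># H" using ne unfolding x_def by (simp add: Min_in)
  have xmin: "\<And>h. h \<in># H \<Longrightarrow> x \<le> h" unfolding x_def by simp
  have Heq: "H = image_mset (gH A B f) (mset_set (JJ n f))" using inv by (simp add: scinv_def)
  obtain j where jJ: "j \<in> JJ n f" and xj: "x = gH A B f j"
    using xin Heq finJJ by (metis finite_set_mset_mset_set imageE set_image_mset)
  have jn: "j < n" "f j < n" using jJ by (auto simp: JJ_def)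
  define p where "p = mink A B (f j) j"
  define f' where "f' = f(j := Suc (f j))"
  have x_eq: "x = (p, f j, j)" using xj by (simp add: gH_def p_def)
  have Hrem: "H - {#x#} = image_mset (gH A B f) (mset_set (JJ n f - {j}))"
    using Heq xj jJ finJJ by (simp add: mset_set.remove)
  have Hrem': "H - {#x#} = image_mset (gH A B f') (mset_set (JJ n f - {j}))"
    unfolding Hrem by (rule image_mset_cong) (auto simp: gH_def f'_def finJJ)
  define H'' where "H'' = (if Suc (f j) < length A then add_mset (mink A B (Suc (f j)) j, Suc (f j), j) (H - {#x#}) else H - {#x#})"
  define C' where "C' = (if C = [] \<or> (\<not> dominates (last C) p \<and> last C \<noteq> p) then C @ [p] else C)"
  have st: "sc_step A B (H,C) = (H'', C')"
    unfolding H''_def C'_def using step_eq[OF ne, of p "f j" j A B C] x_def x_eq by simp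
  have H''eq: "H'' = image_mset (gH A B f') (mset_set (JJ n f'))"
  proof (cases "Suc (f j) < n")
    case True
    have "JJ n f' = insert j (JJ n f - {j})" using True jn by (auto simp: JJ_def f'_def)
    moreover have "mset_set (insert j (JJ n f - {j})) = add_mset j (mset_set (JJ n f - {j}))"
      using finJJ by (intro mset_set.insert) auto
    ultimately show ?thesis using True lA Hrem'
      by (simp only: H''_def if_True) (simp add: gH_def f'_def)
  next
    case False
    have "JJ n f' = JJ n f - {j}" using False jn by (auto simp: JJ_def f'_def)
    then show ?thesis using False lA Hrem' by (simp add: H''_def)
  qed
  have PP': "PP A B n f' = insert p (PP A B n f)"
    using jn unfolding PP_def f'_def p_def by (auto simp: less_Suc_eq)
  have Pp: "\<forall>q\<in>PP A B n f. q \<le> p"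
  proof
    fix q assume "q \<in> PP A B n f"
    then have "q \<le> fst x" using inv xin by (simp add: scinv_def)
    then show "q \<le> p" using x_eq by simp
  qed
  have pnd: "\<forall>q\<in>PP A B n f. \<not> dominates p q" using Pp lex_not_dom by blast
  have Cset: "set C = par (PP A B n f)" and Csort: "sorted_wrt (<) C"
    and Cnil: "C = [] \<longleftrightarrow> PP A B n f = {}"
    and Clast: "C \<noteq> [] \<longrightarrow> (\<forall>q\<in>PP A B n f. snd (last C) \<le> snd q)"
    using inv by (auto simp: scinv_def)
  have Cpart: "set C' = par (PP A B n f') \<and> sorted_wrt (<) C' \<and> (C' = [] \<longleftrightarrow> PP A B n f' = {}) \<and>
     (C' \<noteq> [] \<longrightarrow> (\<forall>q\<in>PP A B n f'. snd (last C') \<le> snd q))"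
  proof (cases "C = []")
    case True
    then have "PP A B n f = {}" using Cnil by simp
    then show ?thesis using True unfolding C'_def PP' par_def by (auto simp: dominates_def)
  next
    case False
    define m where "m = last C"
    have mC: "m \<in> set C" using False m_def by simp
    have mP: "m \<in> PP A B n f" using mC Cset par_def by auto
    have mlow: "\<forall>q\<in>PP A B n f. snd m \<le> snd q" using Clast False m_def by simp
    have mp: "m \<le> p" using Pp mP by blast
    show ?thesis
    proof (cases "dominates m p \<or> m = p")
      case True
      then have C'C: "C' = C" using False unfolding C'_def m_def by auto
      have "par (insert p (PP A B n f)) = par (PP A B n f)"
      proof (cases "m = p")
        case True then show ?thesis using mP by (simp add: insert_absorb)
      next
        case F2: False
        then have "dominates m p" using True by simp
        then show ?thesis using mP pnd unfolding par_def by auto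
      qed
      moreover have "snd m \<le> snd p" using True unfolding dominates_def by auto
      ultimately show ?thesis using C'C Cset Csort False mlow m_def PP' by auto
    next
      case True2: False
      then have C'C: "C' = C @ [p]" using False unfolding C'_def m_def by auto
      have mlt: "m < p" using mp True2 by auto
      have py: "snd p < snd m"
        using mlt True2 by (cases m; cases p) (auto simp: dominates_def)
      have pnP: "p \<notin> PP A B n f" using py mlow by force
      have "par (insert p (PP A B n f)) = insert p (par (PP A B n f))"
        using pnd py mlow unfolding par_def dominates_def by force
      moreover have "sorted_wrt (<) (C @ [p])"
        using Csort Cset Pp pnP unfolding par_def
        by (auto simp: sorted_wrt_append order.order_iff_strict)
      moreover have "\<forall>q\<in>PP A B n f'. snd p \<le> snd q" using PP' py mlow by force
      ultimately show ?thesis using C'C Cset PP' by auto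
    qed
  qed
  have Hpart: "\<forall>q\<in>PP A B n f'. \<forall>h\<in>#H''. q \<le> fst h"
  proof (intro ballI)
    fix q h assume q: "q \<in> PP A B n f'" and h: "h \<in># H''"
    have qp: "q \<le> p" using q PP' Pp by auto
    show "q \<le> fst h"
    proof (cases "h \<in># H - {#x#}")
      case True
      then have hH: "h \<in># H" by (meson in_diffD)
      have "x \<le> h" using xmin hH by blast
      then have "p \<le> fst h" using x_eq by (cases h) auto
      then show ?thesis using qp by simp
    next
      case False
      then have "h = (mink A B (Suc (f j)) j, Suc (f j), j)" "Suc (f j) < length A"
        using h unfolding H''_def by (auto split: if_splits)
      then show ?thesis using col_mono[OF sA, of "f j" B j] qp p_def by simp
    qed
  qed
  have fle: "\<forall>k<n. f' k \<le> n" using inv jn by (auto simp: scinv_def f'_def)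
  have "scinv A B n f' (H'', C')"
    unfolding scinv_def using fle H''eq Cpart Hpart by simp
  then show ?thesis using jn st f'_def by auto
qed

lemma sc_state_Suc: "sc_state A B (Suc t) = sc_step A B (sc_state A B t)"
  by (simp add: sc_state_def)

lemma len_step: "length (snd s) \<le> length (snd (sc_step A B s))"
  by (cases s) (auto simp: sc_step_def Let_def)

lemma len_mono: "t \<le> t' \<Longrightarrow> length (snd (sc_state A B t)) \<le> length (snd (sc_state A B t'))"
proof (induction t' rule: dec_induct)
  case base then show ?case by simp
next
  case (step m)
  have "length (snd (sc_state A B m)) \<le> length (snd (sc_state A B (Suc m)))"
    unfolding sc_state_Suc by (rule len_step)
  then show ?case using step.IH by (rule order_trans[rotated])
qed

lemma inv_size: "scinv A B n f s \<Longrightarrow> size (fst s) \<le> n"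
proof -
  assume "scinv A B n f s"
  then have "size (fst s) = card (JJ n f)" by (simp add: scinv_def)
  also have "\<dots> \<le> card {..<n}" by (rule card_mono) (auto simp: JJ_def)
  finally show ?thesis by simp
qed

lemma inv_nonempty: "scinv A B n f s \<Longrightarrow> j < n \<Longrightarrow> f j < n \<Longrightarrow> fst s \<noteq> {#}"
  unfolding scinv_def using finJJ[of n f] by (auto simp: JJ_def mset_set_empty_iff)

lemma inv_empty: "scinv A B n f s \<Longrightarrow> \<forall>j<n. f j = n \<Longrightarrow> fst s = {#}"
proof -
  assume a: "scinv A B n f s" "\<forall>j<n. f j = n"
  then have "JJ n f = {}" by (auto simp: JJ_def)
  then show ?thesis using a(1) by (simp add: scinv_def)
qed

lemma sum_full:
  fixes n :: nat and f :: "nat \<Rightarrow> nat"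
  assumes "\<forall>j<n. f j \<le> n" "sum f {..<n} = n * n"
  shows "\<forall>j<n. f j = n"
proof (rule ccontr)
  assume "\<not> (\<forall>j<n. f j = n)"
  then obtain j where j: "j < n" "f j \<noteq> n" by blast
  have "f j \<le> n" using assms(1) j(1) by blast
  then have fj: "f j < n" using j(2) by linarith
  have a1: "\<forall>x\<in>{..<n}. f x \<le> n" using assms(1) by simp
  have a2: "\<exists>a\<in>{..<n}. f a < n" using j(1) fj by blast
  have "sum f {..<n} < sum (\<lambda>_. n) {..<n}"
    using sum_strict_mono_ex1[OF finite_lessThan a1 a2] .
  then show False using assms(2) by simp
qed

lemma run:
  assumes lA: "length A = n" and lB: "length B = n" and sA: "sorted_wrt (<) A"
  shows "t \<le> n * n \<Longrightarrow> \<exists>f. scinv A B n f (sc_state A B t) \<and> sum f {..<n} = t"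
proof (induction t)
  case 0
  have JJ0: "JJ n (\<lambda>_. 0) = {..<n}" by (auto simp: JJ_def)
  have PP0: "PP A B n (\<lambda>_. 0) = {}" by (auto simp: PP_def)
  have "fst (sc_state A B 0) = image_mset (gH A B (\<lambda>_. 0)) (mset_set (JJ n (\<lambda>_. 0)))"
  proof -
    have "gH A B (\<lambda>_. 0) = (\<lambda>j. (mink A B 0 j, 0, j))" by (auto simp: gH_def)
    then show ?thesis unfolding JJ0 by (simp add: sc_state_def sc_init_def lB mset_set_upto_eq_mset_upto)
  qed
  moreover have "snd (sc_state A B 0) = []" by (simp add: sc_state_def sc_init_def)
  ultimately have "scinv A B n (\<lambda>_. 0) (sc_state A B 0)"
    unfolding scinv_def PP0 by (simp add: par_def)
  then show ?case by auto
next
  case (Suc t)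
  then obtain f where f: "scinv A B n f (sc_state A B t)" "sum f {..<n} = t" by auto
  have fle: "\<forall>j<n. f j \<le> n" using f by (simp add: scinv_def)
  have "\<exists>j<n. f j < n"
  proof (rule ccontr)
    assume "\<not> ?thesis"
    then have "\<forall>j<n. f j = n" using fle by (meson antisym not_less)
    then have "sum f {..<n} = n * n" by simp
    then show False using f Suc by simp
  qed
  then obtain j0 where "j0 < n" "f j0 < n" by blast
  then have ne: "fst (sc_state A B t) \<noteq> {#}" using inv_nonempty f(1) by blast
  obtain H C where HC: "sc_state A B t = (H, C)" by (cases "sc_state A B t")
  have "scinv A B n f (H,C)" "H \<noteq> {#}" using f(1) ne HC by simp_all
  from step_inv[OF this lA sA] obtain j where
    j: "j < n" "f j < n" "scinv A B n (f(j := Suc (f j))) (sc_step A B (H, C))" by blast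
  have s1: "sum (f(j := Suc (f j))) {..<n} = Suc (f j) + sum (f(j := Suc (f j))) ({..<n} - {j})"
    using j(1) by (subst sum.remove[of "{..<n}" j]) auto
  have s2: "sum (f(j := Suc (f j))) ({..<n} - {j}) = sum f ({..<n} - {j})"
    by (rule sum.cong) auto
  have s3: "sum f {..<n} = f j + sum f ({..<n} - {j})"
    using j(1) by (subst sum.remove[of "{..<n}" j]) auto
  have "sum (f(j := Suc (f j))) {..<n} = Suc t" using s1 s2 s3 f(2) by simp
  moreover have "sc_state A B (Suc t) = sc_step A B (H, C)" using HC sc_state_Suc by simp
  ultimately have "scinv A B n (f(j := Suc (f j))) (sc_state A B (Suc t)) \<and> sum (f(j := Suc (f j))) {..<n} = Suc t"
    using j(3) by simp
  then show ?case by (intro exI[of _ "f(j := Suc (f j))"])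
qed

theorem mainTheorem5:
  "\<exists>c::real. c > 0 \<and>
     (\<forall>(n::nat) A B. n \<ge> 2 \<longrightarrow> length A = n \<longrightarrow> length B = n \<longrightarrow>
        sorted_pareto_list A \<longrightarrow> sorted_pareto_list B \<longrightarrow>
        (\<exists>t. fst (sc_state A B t) = {#}) \<and>
        set (sc_output A B) = pareto_sum A B \<and>
        sc_time A B \<le> c * real n ^ 2 * log 2 (real n) \<and>
        real (sc_space A B) \<le> c * (real n + real (card (pareto_sum A B))))"
proof (rule exI[of _ 10], intro conjI allI impI)
  show "(10::real) > 0" by simp
  fix n :: nat and A B :: "point list"
  assume n2: "n \<ge> 2" and lA: "length A = n" and lB: "length B = n"
    and sA': "sorted_pareto_list A" and sB': "sorted_pareto_list B"
  have sA: "sorted_wrt (<) A" using sA' by (simp add: sorted_pareto_list_def)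
  define N where "N = n * n"
  have R: "\<And>t. t \<le> N \<Longrightarrow> \<exists>f. scinv A B n f (sc_state A B t) \<and> sum f {..<n} = t"
    using run[OF lA lB sA] N_def by blast
  have ne: "fst (sc_state A B t) \<noteq> {#}" if "t < N" for t
  proof -
    have "t \<le> N" using that by simp
    then obtain f where f: "scinv A B n f (sc_state A B t)" "sum f {..<n} = t" using R by blast
    have fle: "\<forall>j<n. f j \<le> n" using f by (simp add: scinv_def)
    have "\<exists>j<n. f j < n"
    proof (rule ccontr)
      assume "\<not> ?thesis"
      then have "\<forall>j<n. f j = n" using fle by (meson antisym not_less)
      then have "sum f {..<n} = n * n" by simp
      then show False using f that N_def by simp
    qed
    then show ?thesis using inv_nonempty f(1) by blast
  qed
  obtain fN where fN: "scinv A B n fN (sc_state A B N)" "sum fN {..<n} = N" using R[OF order_refl] by blast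
  have fNall: "\<forall>j<n. fN j = n"
    using sum_full[of n fN] fN N_def by (simp add: scinv_def)
  have emp: "fst (sc_state A B N) = {#}" using inv_empty fN(1) fNall by blast
  have iters: "sc_iters A B = N"
    unfolding sc_iters_def
  proof (rule Least_equality)
    show "fst (sc_state A B N) = {#}" by (rule emp)
    fix y assume "fst (sc_state A B y) = {#}"
    then show "N \<le> y" using ne not_less by blast
  qed
  show "\<exists>t. fst (sc_state A B t) = {#}" using emp by blast
  have PPf: "PP A B n fN = entries A B"
    unfolding PP_def entries_def using fNall lA lB by (metis (no_types, lifting))
  have outset: "set (snd (sc_state A B N)) = pareto_sum A B"
    using fN(1) PPf by (simp add: scinv_def pareto_sum_def par_def)
  show "set (sc_output A B) = pareto_sum A B"
    using outset iters by (simp add: sc_output_def)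
  have dist: "distinct (snd (sc_state A B N))"
    using fN(1) by (simp add: scinv_def strict_sorted_iff)
  have lenN: "length (snd (sc_state A B N)) = card (pareto_sum A B)"
    using distinct_card[OF dist] outset by simp
  have sz: "size (fst (sc_state A B t)) \<le> n" if "t \<le> N" for t
    using R[OF that] inv_size by blast
  define L where "L = log 2 (real n + 1)"
  define lg where "lg = log 2 (real n)"
  have lg1: "1 \<le> lg" unfolding lg_def using n2 by simp
  have L0: "0 \<le> L" unfolding L_def by simp
  have LL: "L \<le> 2 * lg"
  proof -
    have "real n + 1 \<le> real n * real n"
    proof -
      have "real n * 2 \<le> real n * real n" using n2 by (intro mult_left_mono) auto
      moreover have "real n \<ge> 2" using n2 by simp
      ultimately show ?thesis by linarith
    qed
    then have "log 2 (real n + 1) \<le> log 2 (real n * real n)" using n2 by simp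
    also have "\<dots> = 2 * log 2 (real n)" using n2 by (simp add: log_mult)
    finally show ?thesis unfolding L_def lg_def .
  qed
  have hop: "heap_op_cost s \<le> 1 + L" if "s \<le> n" for s
    unfolding heap_op_cost_def L_def using that by simp
  have T1: "(\<Sum>j<length B. heap_op_cost j) \<le> real n * (1 + L)"
  proof -
    have "(\<Sum>j<length B. heap_op_cost j) \<le> real (card {..<length B}) * (1 + L)"
      by (rule sum_bounded_above) (use hop lB in auto)
    then show ?thesis using lB by simp
  qed
  have T2: "(\<Sum>t<sc_iters A B. step_cost (sc_state A B t)) \<le> real N * (3 + 2 * L)"
  proof -
    have "(\<Sum>t<N. step_cost (sc_state A B t)) \<le> real (card {..<N}) * (3 + 2 * L)"
    proof (rule sum_bounded_above)
      fix t assume "t \<in> {..<N}"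
      then have "size (fst (sc_state A B t)) \<le> n" using sz by simp
      then have "heap_op_cost (size (fst (sc_state A B t))) \<le> 1 + L" using hop by blast
      then show "step_cost (sc_state A B t) \<le> 3 + 2 * L"
        unfolding step_cost_def using L0 by auto
    qed
    then show ?thesis using iters by simp
  qed
  have nn: "real n \<le> real n ^ 2" using n2 by (simp add: power2_eq_square)
  have "sc_time A B \<le> real n * (1 + L) + real N * (3 + 2 * L)"
    unfolding sc_time_def using T1 T2 by linarith
  also have "\<dots> \<le> real n ^ 2 * (1 + L) + real n ^ 2 * (3 + 2 * L)"
    using nn L0 N_def by (simp add: mult_right_mono power2_eq_square)
  also have "\<dots> = real n ^ 2 * (4 + 3 * L)" by (simp add: algebra_simps)
  also have "\<dots> \<le> real n ^ 2 * (10 * lg)"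
    using LL lg1 by (intro mult_left_mono) auto
  finally show "sc_time A B \<le> 10 * real n ^ 2 * log 2 (real n)"
    unfolding lg_def by (simp add: algebra_simps)
  have sp: "state_space (sc_state A B t) \<le> n + card (pareto_sum A B)" if "t \<in> {0..N}" for t
  proof -
    have "t \<le> N" using that by simp
    then have "size (fst (sc_state A B t)) \<le> n" "length (snd (sc_state A B t)) \<le> card (pareto_sum A B)"
      using sz len_mono[of t N A B] lenN by auto
    then show ?thesis unfolding state_space_def by simp
  qed
  have "sc_space A B \<le> n + card (pareto_sum A B)"
    unfolding sc_space_def iters using sp by (intro Max.boundedI) auto
  then have "real (sc_space A B) \<le> real n + real (card (pareto_sum A B))" by linarith
  moreover have "0 \<le> real n" "0 \<le> real (card (pareto_sum A B))" by simp_all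
  ultimately show "real (sc_space A B) \<le> 10 * (real n + real (card (pareto_sum A B)))"
    by (smt (verit))
qed

end
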